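(* Consider the TVFJ dynamics described in the context. For every $t\in\mathbb N$, $t\ge1$, the matrix \[ \Sigma[t]:=\sum_{\tau=0}^{t-1}\Phi(t,\tau+1)\,(I-\Lambda[\tau]) \] is row-substochastic, i.e., it has entries in $[0,1]$ and each of its row sums is at most $1$.
   Context: There are $n$ agents with opinions $\mathbf x[t]\in\mathbb R^n$ and innate opinions $\mathbf s\in[0,1]^n$, evolving by $\mathbf x[t+1]=\Lambda[t]W[t]\mathbf x[t]+(I-\Lambda[t])\mathbf s$, where $W[t]\in\mathbb R^{n\times n}$ is row-stochastic (nonnegative entries, rows summing to 1) and $\Lambda[t]=\mathrm{diag}(\lambda_1[t],\dots,\lambda_n[t])$ with $\lambda_i[t]\in[0,1]$. The state transition matrix is $\Phi(t,\tau)=\Lambda[t-1]W[t-1]\cdots\Lambda[\tau]W[\tau]$ for $t>\tau$ and $\Phi(\tau,\tau)=I$. *)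

theory Defs
  imports "HOL-Analysis.Analysis"
begin

text \<open>Lambda[t] = diag(lambda_1[t],...,lambda_n[t]) given by the vector lam t.\<close>
definition diagm :: "real^'n \<Rightarrow> real^'n^'n" where
  "diagm v = (\<chi> i j. if i = j then v $ i else 0)"

definition row_stochastic :: "real^'n^'n \<Rightarrow> bool" where
  "row_stochastic A \<longleftrightarrow> (\<forall>i j. A $ i $ j \<ge> 0) \<and> (\<forall>i. (\<Sum>j\<in>UNIV. A $ i $ j) = 1)"

definition row_substochastic :: "real^'n^'n \<Rightarrow> bool" where
  "row_substochastic A \<longleftrightarrow> (\<forall>i j. 0 \<le> A $ i $ j \<and> A $ i $ j \<le> 1) \<and> (\<forall>i. (\<Sum>j\<in>UNIV. A $ i $ j) \<le> 1)"

text \<open>State transition matrix Phi(t,tau) = Lambda[t-1]W[t-1]...Lambda[tau]W[tau] for t > tau,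
  and the identity for t = tau (also returned for t < tau, where it is not used).\<close>
fun Phi :: "(nat \<Rightarrow> real^'n) \<Rightarrow> (nat \<Rightarrow> real^'n^'n) \<Rightarrow> nat \<Rightarrow> nat \<Rightarrow> real^'n^'n" where
  "Phi lam W 0 tau = mat 1"
| "Phi lam W (Suc t) tau =
     (if Suc t \<le> tau then mat 1 else (diagm (lam t) ** W t) ** Phi lam W t tau)"

definition Sigma :: "(nat \<Rightarrow> real^'n) \<Rightarrow> (nat \<Rightarrow> real^'n^'n) \<Rightarrow> nat \<Rightarrow> real^'n^'n" where
  "Sigma lam W t = (\<Sum>tau<t. Phi lam W t (tau + 1) ** (mat 1 - diagm (lam tau)))"

end

theory Submission
  imports Defs
begin

definition inv_sub :: "real^'n^'n \<Rightarrow> bool" where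
  "inv_sub A \<longleftrightarrow> (\<forall>i j. 0 \<le> A $ i $ j) \<and> (\<forall>i. (\<Sum>j\<in>UNIV. A $ i $ j) \<le> 1)"

lemma mul_sum: "(M::real^'n^'n) ** sum f S = (\<Sum>x\<in>S. M ** f x)"
  by (induction S rule: infinite_finite_induct) (auto simp: matrix_add_ldistrib)

lemma Sigma_Suc:
  "Sigma lam W (Suc t) = (diagm (lam t) ** W t) ** Sigma lam W t + (mat 1 - diagm (lam t))"
proof -
  have "Sigma lam W (Suc t) = (\<Sum>tau<t. Phi lam W (Suc t) (tau + 1) ** (mat 1 - diagm (lam tau)))
        + Phi lam W (Suc t) (t + 1) ** (mat 1 - diagm (lam t))"
    by (simp add: Sigma_def)
  also have "(\<Sum>tau<t. Phi lam W (Suc t) (tau + 1) ** (mat 1 - diagm (lam tau)))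
     = (\<Sum>tau<t. (diagm (lam t) ** W t) ** (Phi lam W t (tau + 1) ** (mat 1 - diagm (lam tau))))"
    by (rule sum.cong) (auto simp: matrix_mul_assoc)
  also have "\<dots> = (diagm (lam t) ** W t) ** Sigma lam W t"
    by (simp add: Sigma_def mul_sum)
  finally show ?thesis by simp
qed

lemma diagm_mul: "(diagm l ** M) $ i $ j = l $ i * M $ i $ j"
proof -
  have "(diagm l ** M) $ i $ j = (\<Sum>k\<in>UNIV. (if i = k then l $ i else 0) * M $ k $ j)"
    by (simp add: matrix_matrix_mult_def diagm_def)
  also have "\<dots> = l $ i * M $ i $ j"
  proof -
    have "(\<Sum>k\<in>UNIV. (if i = k then l $ i else 0) * M $ k $ j) = (\<Sum>k\<in>UNIV. if k = i then l $ i * M $ i $ j else 0)"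
      by (rule sum.cong) auto
    then show ?thesis by simp
  qed
  finally show ?thesis .
qed

lemma step:
  assumes A: "inv_sub A" and Wr: "row_stochastic Wm"
    and l: "\<And>i. 0 \<le> l $ i \<and> l $ i \<le> 1"
  shows "inv_sub ((diagm l ** Wm) ** A + (mat 1 - diagm l))"
proof -
  have WA: "(Wm ** A) $ i $ j = (\<Sum>k\<in>UNIV. Wm $ i $ k * A $ k $ j)" for i j
    by (simp add: matrix_matrix_mult_def)
  have e: "((diagm l ** Wm) ** A + (mat 1 - diagm l)) $ i $ j
     = l $ i * (\<Sum>k\<in>UNIV. Wm $ i $ k * A $ k $ j) + (if i = j then 1 - l $ i else 0)" for i j
  proof -
    have "((diagm l ** Wm) ** A + (mat 1 - diagm l)) $ i $ j = l $ i * (Wm ** A) $ i $ j + (mat 1 - diagm l) $ i $ j"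
      by (simp add: matrix_mul_assoc[symmetric] diagm_mul)
    then show ?thesis by (simp add: WA mat_def diagm_def)
  qed
  have nn: "0 \<le> (\<Sum>k\<in>UNIV. Wm $ i $ k * A $ k $ j)" for i j
    using A Wr by (auto simp: inv_sub_def row_stochastic_def intro!: sum_nonneg)
  have rs: "(\<Sum>j\<in>UNIV. \<Sum>k\<in>UNIV. Wm $ i $ k * A $ k $ j) \<le> 1" for i
  proof -
    have "(\<Sum>j\<in>UNIV. \<Sum>k\<in>UNIV. Wm $ i $ k * A $ k $ j) = (\<Sum>k\<in>UNIV. Wm $ i $ k * (\<Sum>j\<in>UNIV. A $ k $ j))"
      by (subst sum.swap) (simp add: sum_distrib_left)
    also have "\<dots> \<le> (\<Sum>k\<in>UNIV. Wm $ i $ k * 1)"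
      by (intro sum_mono mult_left_mono) (use A Wr in \<open>auto simp: inv_sub_def row_stochastic_def\<close>)
    also have "\<dots> = 1" using Wr by (simp add: row_stochastic_def)
    finally show ?thesis .
  qed
  show ?thesis unfolding inv_sub_def
  proof (intro conjI allI)
    fix i j show "0 \<le> ((diagm l ** Wm) ** A + (mat 1 - diagm l)) $ i $ j"
      unfolding e using l[of i] nn[of i j] by auto
  next
    fix i
    have "(\<Sum>j\<in>UNIV. ((diagm l ** Wm) ** A + (mat 1 - diagm l)) $ i $ j)
      = l $ i * (\<Sum>j\<in>UNIV. \<Sum>k\<in>UNIV. Wm $ i $ k * A $ k $ j) + (1 - l $ i)"
      unfolding e by (simp add: sum.distrib sum_distrib_left)
    also have "\<dots> \<le> l $ i * 1 + (1 - l $ i)"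
      using l[of i] rs[of i] by (intro add_right_mono mult_left_mono) auto
    finally show "(\<Sum>j\<in>UNIV. ((diagm l ** Wm) ** A + (mat 1 - diagm l)) $ i $ j) \<le> 1" by simp
  qed
qed

lemma all_inv:
  assumes W_rs: "\<And>k. row_stochastic (W k)"
    and lam_range: "\<And>k i. 0 \<le> lam k $ i \<and> lam k $ i \<le> 1"
  shows "inv_sub (Sigma lam W t)"
proof (induction t)
  case 0 then show ?case by (simp add: inv_sub_def Sigma_def)
next
  case (Suc t) then show ?case
    unfolding Sigma_Suc by (intro step W_rs lam_range)
qed

theorem lemma4:
  fixes lam :: "nat \<Rightarrow> real^'n" and W :: "nat \<Rightarrow> real^'n^'n" and t :: nat
  assumes W_rs: "\<And>k. row_stochastic (W k)"
    and lam_range: "\<And>k i. 0 \<le> lam k $ i \<and> lam k $ i \<le> 1"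
    and t_pos: "t \<ge> 1"
  shows "row_substochastic (Sigma lam W t)"
proof -
  have I: "inv_sub (Sigma lam W t)" by (rule all_inv[OF W_rs lam_range])
  have le: "Sigma lam W t $ i $ j \<le> 1" for i j
  proof -
    have "Sigma lam W t $ i $ j \<le> (\<Sum>j\<in>UNIV. Sigma lam W t $ i $ j)"
      using I by (intro member_le_sum) (auto simp: inv_sub_def)
    also have "\<dots> \<le> 1" using I by (auto simp: inv_sub_def)
    finally show ?thesis .
  qed
  show ?thesis using I le by (auto simp: row_substochastic_def inv_sub_def)
qed

end
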